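(* Let $F\subset\mathrm{Sym}^2(\mathbb{R}^n)$ be a cone subequation invariant under a subgroup of $\mathrm{O}(n)$ acting transitively on $S^{n-1}$, with Riesz characteristic $p=p_F$ and dual Riesz characteristic $q=q_F$. For $\delta\ge0$ let $F(\delta)=\{A: A+\delta(\mathrm{tr}A)\frac1nI\in F\}$. Then the Riesz characteristics of $F(\delta)$ are given by $$p_{F(\delta)}=\frac{n(1+\delta)p}{n+\delta p}=p+\frac{\delta p(n-p)}{n+\delta p},\qquad q_{F(\delta)}=\frac{n(1+\delta)q}{n+\delta q}=q+\frac{\delta q(n-q)}{n+\delta q}.$$ These formulas also hold when $p_F=\infty$ or $q_F=\infty$, that is, for $\delta>0$: $p_F=\infty\Rightarrow p_{F(\delta)}=\frac{n(1+\delta)}{\delta}$ and $q_F=\infty\Rightarrow q_{F(\delta)}=\frac{n(1+\delta)}{\delta}$.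
   Context: A cone subequation is a closed $F\subset\mathrm{Sym}^2(\mathbb{R}^n)$, $\emptyset\ne F\ne\mathrm{Sym}^2(\mathbb{R}^n)$, with $F+\{A\ge0\}\subset F$ and $tF\subset F$ for $t\ge0$. Its Riesz characteristic is $p_F=\sup\{t:P_{e^\perp}-(t-1)P_e\in F\}$ for a (any) unit vector $e$ ($P_e,P_{e^\perp}$ orthogonal projections onto $\mathbb{R}e$, $e^\perp$). The dual of $F$ is $\widetilde F=\mathrm{Sym}^2(\mathbb{R}^n)\setminus(-\mathrm{Int}\,F)$, and the dual Riesz characteristic is $q_F=p_{\widetilde F}$; for $F(\delta)$, $p_{F(\delta)}$ and $q_{F(\delta)}$ are defined in the same way. *)

theory Defs
  imports "HOL-Analysis.Analysis"
begin

definition Sym2 :: "(real^'n^'n) set" where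
  "Sym2 = {A. transpose A = A}"

definition psd :: "real^'n^'n \<Rightarrow> bool" where
  "psd A \<longleftrightarrow> A \<in> Sym2 \<and> (\<forall>x. 0 \<le> x \<bullet> (A *v x))"

definition cone_subequation :: "(real^'n^'n) set \<Rightarrow> bool" where
  "cone_subequation F \<longleftrightarrow>
     F \<subseteq> Sym2 \<and> closed F \<and> F \<noteq> {} \<and> F \<noteq> Sym2 \<and>
     (\<forall>A\<in>F. \<forall>P. psd P \<longrightarrow> A + P \<in> F) \<and>
     (\<forall>A\<in>F. \<forall>t::real. t \<ge> 0 \<longrightarrow> t *\<^sub>R A \<in> F)"

definition proj_line :: "real^'n \<Rightarrow> real^'n^'n" where
  "proj_line e = (\<chi> i j. e$i * e$j)"

definition proj_perp :: "real^'n \<Rightarrow> real^'n^'n" where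
  "proj_perp e = mat 1 - proj_line e"

definition riesz_char :: "(real^'n^'n) set \<Rightarrow> real^'n \<Rightarrow> ereal" where
  "riesz_char F e = Sup {ereal t | t. proj_perp e - (t - 1) *\<^sub>R proj_line e \<in> F}"

definition dual_subeq :: "(real^'n^'n) set \<Rightarrow> (real^'n^'n) set" where
  "dual_subeq F = Sym2 - uminus ` ((top_of_set Sym2) interior_of F)"

definition F_delta :: "(real^'n^'n) set \<Rightarrow> real \<Rightarrow> (real^'n^'n) set" where
  "F_delta F \<delta> = {A \<in> Sym2. A + (\<delta> * trace A / real CARD('n)) *\<^sub>R mat 1 \<in> F}"

definition transitive_orth_subgroup :: "(real^'n^'n) set \<Rightarrow> bool" where
  "transitive_orth_subgroup G \<longleftrightarrow>
     (\<forall>g\<in>G. orthogonal_matrix g) \<and> mat 1 \<in> G \<and>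
     (\<forall>g\<in>G. \<forall>h\<in>G. g ** h \<in> G) \<and> (\<forall>g\<in>G. transpose g \<in> G) \<and>
     (\<forall>u v. norm u = 1 \<longrightarrow> norm v = 1 \<longrightarrow> (\<exists>g\<in>G. g *v u = v))"

definition invariant_under :: "(real^'n^'n) set \<Rightarrow> (real^'n^'n) set \<Rightarrow> bool" where
  "invariant_under G F \<longleftrightarrow> (\<forall>g\<in>G. \<forall>A\<in>F. g ** A ** transpose g \<in> F)"

end

theory Submission
  imports Defs
begin


definition Mab :: "real^'n \<Rightarrow> real \<Rightarrow> real \<Rightarrow> real^'n^'n" where
  "Mab e a b = a *\<^sub>R proj_perp e + b *\<^sub>R proj_line e"

lemma proj_line_mv: "proj_line e *v x = (e \<bullet> x) *\<^sub>R e"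
  by (simp add: proj_line_def matrix_vector_mult_def vec_eq_iff inner_vec_def sum_distrib_left sum_distrib_right algebra_simps)

lemma mat1_mv: "(mat 1 :: real^'n^'n) *v x = x" by simp

lemma Mab_mv: "Mab e a b *v x = a *\<^sub>R x + (b - a) *\<^sub>R ((e \<bullet> x) *\<^sub>R e)"
  by (simp add: Mab_def proj_perp_def matrix_vector_mult_add_rdistrib matrix_vector_mult_diff_rdistrib
      proj_line_mv scaleR_matrix_vector_assoc[symmetric] algebra_simps)

lemma Mab_quad: "x \<bullet> (Mab e a b *v x) = a * (x \<bullet> x) + (b - a) * (e \<bullet> x)^2"
  by (simp add: Mab_mv inner_add_right power2_eq_square inner_commute)

lemma Mab_sym: "Mab e a b \<in> Sym2"
  by (simp add: Sym2_def Mab_def proj_perp_def proj_line_def transpose_def vec_eq_iff mat_def mult.commute)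

lemma Mab_psd: fixes e :: "real^'n" assumes "norm e = 1" "a \<ge> 0" "b \<ge> 0" shows "psd (Mab e a b)"
  unfolding psd_def
proof (intro conjI allI)
  show "Mab e a b \<in> Sym2" by (rule Mab_sym)
  fix x :: "real^'n"
  have cs: "(e \<bullet> x)^2 \<le> x \<bullet> x"
  proof -
    have "\<bar>e \<bullet> x\<bar> \<le> norm x" using Cauchy_Schwarz_ineq2[of e x] assms(1) by simp
    hence "(e \<bullet> x)^2 \<le> (norm x)^2" by (metis abs_ge_zero power2_abs power_mono)
    thus ?thesis by (simp add: power2_norm_eq_inner)
  qed
  have "x \<bullet> (Mab e a b *v x) = a * (x \<bullet> x - (e \<bullet> x)^2) + b * (e \<bullet> x)^2"
    by (simp add: Mab_quad algebra_simps)
  also have "\<dots> \<ge> 0" using cs assms by (intro add_nonneg_nonneg mult_nonneg_nonneg) auto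
  finally show "0 \<le> x \<bullet> (Mab e a b *v x)" .
qed

lemma Mab_scale: "c *\<^sub>R Mab e a b = Mab e (c*a) (c*b)"
  by (simp add: Mab_def algebra_simps)
lemma Mab_add: "Mab e a b + Mab e c d = Mab e (a+c) (b+d)"
  by (simp add: Mab_def algebra_simps)
lemma Mab_neg: "- Mab e a b = Mab e (-a) (-b)"
  by (simp add: Mab_def algebra_simps)
lemma Mab_mat1: "mat 1 = Mab e 1 1"
  by (simp add: Mab_def proj_perp_def)
lemma Mab_riesz: "proj_perp e - (t - 1) *\<^sub>R proj_line e = Mab e 1 (1 - t)"
  by (simp add: Mab_def algebra_simps)

lemma trace_scaleR: "trace (c *\<^sub>R (A::real^'n^'n)) = c * trace A"
  by (simp add: trace_def sum_distrib_left)
lemma trace_neg: "trace (- (A::real^'n^'n)) = - trace A"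
  by (simp add: trace_def sum_negf)

lemma trace_proj_line: fixes e :: "real^'n" assumes "norm e = 1" shows "trace (proj_line e) = 1"
proof -
  have "trace (proj_line e) = e \<bullet> e" by (simp add: trace_def proj_line_def inner_vec_def)
  thus ?thesis using assms by (simp add: dot_square_norm)
qed

lemma trace_Mab: fixes e :: "real^'n" assumes "norm e = 1"
  shows "trace (Mab e a b) = a * (real CARD('n) - 1) + b"
  using assms by (simp add: Mab_def trace_add trace_scaleR proj_perp_def trace_sub trace_I trace_proj_line)



definition Tset :: "(real^'n^'n) set \<Rightarrow> real^'n \<Rightarrow> real set" where
  "Tset S e = {t. Mab e 1 (1 - t) \<in> S}"

lemma riesz_Tset: "riesz_char S e = Sup (ereal ` Tset S e)"
  unfolding riesz_char_def Tset_def Mab_riesz by (simp add: image_def) (metis (lifting))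

definition good :: "(real^'n^'n) set \<Rightarrow> real^'n \<Rightarrow> bool" where
  "good S e \<longleftrightarrow> closed S \<and> (\<forall>A\<in>S. \<forall>X. psd X \<longrightarrow> A + X \<in> S) \<and>
     (\<forall>A\<in>S. \<forall>c>0. c *\<^sub>R A \<in> S) \<and> 0 \<in> S \<and> (\<forall>a b. a < 0 \<longrightarrow> b < 0 \<longrightarrow> Mab e a b \<notin> S)"

lemma Sup_ereal_atMost: "Sup (ereal ` {..x}) = ereal x"
  by (rule antisym) (auto intro: Sup_least Sup_upper)

lemma good_addpsd: "good S e \<Longrightarrow> norm e = 1 \<Longrightarrow> Mab e a b \<in> S \<Longrightarrow> c \<ge> 0 \<Longrightarrow> d \<ge> 0 \<Longrightarrow> Mab e (a+c) (b+d) \<in> S"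
  unfolding good_def using Mab_psd[of e c d] Mab_add[of e a b c d] by metis

lemma good_scale: "good S e \<Longrightarrow> Mab e a b \<in> S \<Longrightarrow> c > 0 \<Longrightarrow> Mab e (c*a) (c*b) \<in> S"
  unfolding good_def using Mab_scale[of c e a b] by metis

lemma good_scale_iff: assumes "good S e" "c > 0" shows "Mab e (c*a) (c*b) \<in> S \<longleftrightarrow> Mab e a b \<in> S"
proof
  assume "Mab e (c*a) (c*b) \<in> S"
  from good_scale[OF assms(1) this, of "1/c"] assms(2) show "Mab e a b \<in> S" by simp
qed (rule good_scale[OF assms(1) _ assms(2)])

lemma T_down: "good S e \<Longrightarrow> norm e = 1 \<Longrightarrow> t \<in> Tset S e \<Longrightarrow> s \<le> t \<Longrightarrow> s \<in> Tset S e"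
  unfolding Tset_def using good_addpsd[of S e 1 "1-t" 0 "t-s"] by simp

lemma T_one: "good S e \<Longrightarrow> norm e = 1 \<Longrightarrow> 1 \<in> Tset S e"
proof -
  assume g: "good S e" and e: "norm e = 1"
  have "Mab e 0 0 \<in> S" using g by (simp add: good_def Mab_def)
  from good_addpsd[OF g e this, of 1 0] show ?thesis by (simp add: Tset_def)
qed

lemma T_closed: "good S e \<Longrightarrow> closed (Tset S e)"
proof -
  assume g: "good S e"
  have "Tset S e = (\<lambda>t. Mab e 1 (1 - t)) -` S" by (auto simp: Tset_def)
  moreover have "closed ((\<lambda>t. Mab e 1 (1 - t)) -` S)"
    by (rule continuous_closed_vimage) (use g in \<open>auto simp: good_def Mab_def intro!: continuous_intros\<close>)
  ultimately show ?thesis by simp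
qed

lemma Mab_pos_iff: assumes "good S e" "c > 0"
  shows "Mab e c d \<in> S \<longleftrightarrow> 1 - d/c \<in> Tset S e"
proof -
  have "Mab e c d = Mab e (c*1) (c*(d/c))" using assms(2) by simp
  thus ?thesis using good_scale_iff[OF assms, of 1 "d/c"] by (simp add: Tset_def)
qed

lemma negP_T: assumes "good S e" "norm e = 1" "Mab e 0 (-1) \<in> S" "c > 0"
  shows "1 + c \<in> Tset S e"
proof -
  have "Mab e (c*0) (c*(-1)) \<in> S" by (rule good_scale[OF assms(1) assms(3) assms(4)])
  from good_addpsd[OF assms(1,2) this, of 1 0] show ?thesis by (simp add: Tset_def)
qed

lemma Sup_fin_bdd: assumes "Sup (ereal ` T) \<noteq> \<infinity>" "1 \<in> T" shows "bdd_above T"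
proof -
  have "ereal 1 \<le> Sup (ereal ` T)" using assms(2) by (auto intro: Sup_upper)
  then obtain r where r: "Sup (ereal ` T) = ereal r" using assms(1) by (cases "Sup (ereal ` T)") auto
  have "\<forall>t\<in>T. t \<le> r" using r by (metis Sup_upper ereal_less_eq(3) imageI)
  thus ?thesis by (auto simp: bdd_above_def)
qed

lemma Sup_inf_unb: assumes "Sup (ereal ` T) = \<infinity>" shows "\<exists>t'\<in>T. x < t'"
proof (rule ccontr)
  assume "\<not> ?thesis"
  hence "Sup (ereal ` T) \<le> ereal x" by (auto intro!: Sup_least)
  thus False using assms by simp
qed



lemma Fd_T: fixes e :: "real^'n" assumes "norm e = 1"
  defines "n \<equiv> real CARD('n)"
  shows "t \<in> Tset (F_delta S \<delta>) e \<longleftrightarrow>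
    Mab e (1 + \<delta> * (n - t) / n) (1 - t + \<delta> * (n - t) / n) \<in> S"
proof -
  have tr: "trace (Mab e 1 (1 - t)) = n - t" using trace_Mab[OF assms(1)] by (simp add: n_def)
  have "Mab e 1 (1 - t) + (\<delta> * trace (Mab e 1 (1 - t)) / real CARD('n)) *\<^sub>R mat 1
     = Mab e (1 + \<delta> * (n - t) / n) (1 - t + \<delta> * (n - t) / n)"
    by (simp add: tr Mab_mat1[of e] Mab_scale Mab_add n_def)
  thus ?thesis by (simp add: Tset_def F_delta_def Mab_sym)
qed


lemma negP_closed: assumes g: "good S e" and e: "norm e = 1" and T: "\<And>t. t \<in> Tset S e"
  shows "Mab e 0 (-1) \<in> S"
proof -
  let ?f = "\<lambda>u. Mab e u (-1)"
  have in1: "?f (inverse (real (Suc k))) \<in> S" for k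
  proof -
    let ?u = "inverse (real (Suc k))"
    have "Mab e 1 (1 - (1 + real (Suc k))) \<in> S" using T[of "1 + real (Suc k)"] by (simp only: Tset_def mem_Collect_eq)
    moreover have "?u > 0" by simp
    ultimately have "Mab e (?u * 1) (?u * (1 - (1 + real (Suc k)))) \<in> S" by (rule good_scale[OF g])
    moreover have "?u * (1 - (1 + real (Suc k))) = -1"
      by (simp del: of_nat_Suc)
    ultimately show ?thesis by (simp only: mult_1_right)
  qed
  have lim: "(\<lambda>k. ?f (inverse (real (Suc k)))) \<longlonglongrightarrow> ?f 0"
    unfolding Mab_def by (intro tendsto_add tendsto_scaleR tendsto_const LIMSEQ_inverse_real_of_nat)
  have "closed S" using g by (simp add: good_def)
  from closed_sequentially[OF this _ lim] in1 show ?thesis by blast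
qed


lemma key:
  fixes S :: "(real^'n^'n) set" and e :: "real^'n"
  assumes g: "good S e" and e: "norm e = 1" and d: "\<delta> \<ge> 0"
  defines "n \<equiv> real CARD('n)"
  defines "p \<equiv> riesz_char S e"
  shows "(p \<noteq> \<infinity> \<longrightarrow> riesz_char (F_delta S \<delta>) e
             = ereal (n * (1 + \<delta>) * real_of_ereal p / (n + \<delta> * real_of_ereal p)))
       \<and> (p = \<infinity> \<longrightarrow> \<delta> > 0 \<longrightarrow> riesz_char (F_delta S \<delta>) e = ereal (n * (1 + \<delta>) / \<delta>))"
proof (intro conjI impI)
  have n0: "n > 0" by (simp add: n_def)
  let ?T = "Tset S e"
  let ?k = "\<lambda>t. \<delta> * (n - t) / n"
  have FdT: "t \<in> Tset (F_delta S \<delta>) e \<longleftrightarrow> Mab e (1 + ?k t) (1 - t + ?k t) \<in> S" for t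
    using Fd_T[OF e] by (simp add: n_def)
  have kpos: "1 + ?k t > 0 \<Longrightarrow> (t \<in> Tset (F_delta S \<delta>) e \<longleftrightarrow> t / (1 + ?k t) \<in> ?T)" for t
  proof -
    assume a: "1 + ?k t > 0"
    have "1 - (1 - t + ?k t) / (1 + ?k t) = t / (1 + ?k t)" using a by (simp add: field_simps)
    thus ?thesis using FdT Mab_pos_iff[OF g a] by simp
  qed
  have kneg: "1 + ?k t < 0 \<Longrightarrow> t > 0 \<Longrightarrow> t \<notin> Tset (F_delta S \<delta>) e" for t
    using FdT g by (auto simp: good_def)
  {
    assume pf: "p \<noteq> \<infinity>"
    have bdd: "bdd_above ?T" using Sup_fin_bdd[of ?T] pf T_one[OF g e] by (simp add: p_def riesz_Tset)
    define p0 where "p0 = Sup ?T"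
    have p0T: "p0 \<in> ?T" unfolding p0_def using closed_contains_Sup[OF _ bdd T_closed[OF g]] T_one[OF g e] by blast
    have Teq: "?T = {..p0}"
      using cSup_upper[OF _ bdd] T_down[OF g e p0T] by (auto simp: p0_def)
    have pp: "p = ereal p0" by (simp add: p_def riesz_Tset Teq Sup_ereal_atMost)
    have p01: "p0 \<ge> 1" using T_one[OF g e] Teq by auto
    define ts where "ts = n * (1 + \<delta>) * p0 / (n + \<delta> * p0)"
    have den: "n + \<delta> * p0 > 0" using n0 d p01 by (simp add: add_pos_nonneg)
    have T'eq: "Tset (F_delta S \<delta>) e = {..ts}"
    proof (intro set_eqI iffI)
      fix t assume tin: "t \<in> Tset (F_delta S \<delta>) e"
      show "t \<in> {..ts}"
      proof (cases "1 + ?k t > 0")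
        case True
        hence "t / (1 + ?k t) \<le> p0" using kpos tin Teq by auto
        hence "t \<le> p0 * (1 + ?k t)" using True by (simp add: divide_le_eq)
        hence "t * n \<le> p0 * (n + \<delta> * (n - t))" using n0 by (simp add: field_simps)
        hence "t * (n + \<delta> * p0) \<le> n * (1 + \<delta>) * p0" by (simp add: algebra_simps)
        thus ?thesis using den by (simp add: ts_def le_divide_eq)
      next
        case False
        hence k0: "n + \<delta> * (n - t) \<le> 0" using n0 by (simp add: field_simps)
        have dt: "\<delta> * t \<ge> n * (1 + \<delta>)" using k0 by (simp add: algebra_simps)
        hence tpos: "t > 0" using n0 d by (smt (verit) mult_nonneg_nonpos mult_pos_pos)
        have "1 + ?k t < 0 \<or> 1 + ?k t = 0" using False by linarith
        then show ?thesis
        proof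
          assume "1 + ?k t < 0" thus ?thesis using kneg tpos tin by blast
        next
          assume z: "1 + ?k t = 0"
          have eqt: "1 - t + ?k t = -t" using z by linarith
          have "Mab e (1 + ?k t) (1 - t + ?k t) \<in> S" using FdT tin by blast
          hence "Mab e 0 (-t) \<in> S" by (metis eqt z)
          hence "Mab e (t * 0) (t * (-1)) \<in> S" by simp
          hence "Mab e 0 (-1) \<in> S" using good_scale_iff[OF g tpos] by blast
          from negP_T[OF g e this, of p0] p01 have "1 + p0 \<in> ?T" by simp
          thus ?thesis using Teq by auto
        qed
      qed
    next
      fix t assume "t \<in> {..ts}"
      hence tle: "t * (n + \<delta> * p0) \<le> n * (1 + \<delta>) * p0" using den by (simp add: ts_def le_divide_eq)
      have "t * n \<le> p0 * (n + \<delta> * (n - t))" using tle by (simp add: algebra_simps)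
      have kp: "1 + ?k t > 0"
      proof -
        have "\<delta> * t * (n + \<delta> * p0) \<le> \<delta> * (n * (1 + \<delta>) * p0)" using tle d by (metis mult.assoc mult_left_mono)
        hence "\<delta> * t * n \<le> n * p0 + n * \<delta> * p0 - \<delta> * t * \<delta> * p0 + \<delta> * n * p0 * \<delta> - n * p0" by (simp add: algebra_simps)
        have "n + \<delta> * (n - t) > 0"
        proof -
          have "(n + \<delta> * (n - t)) * (n + \<delta> * p0) = n * (n + \<delta> * p0) + \<delta> * n * (n + \<delta> * p0) - \<delta> * (t * (n + \<delta> * p0))"
            by (simp add: algebra_simps)
          also have "\<dots> \<ge> n * (n + \<delta> * p0) + \<delta> * n * (n + \<delta> * p0) - \<delta> * (n * (1 + \<delta>) * p0)"
            using tle d by (simp add: mult_left_mono)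
          also have "n * (n + \<delta> * p0) + \<delta> * n * (n + \<delta> * p0) - \<delta> * (n * (1 + \<delta>) * p0) = n * n * (1 + \<delta>)"
            by (simp add: algebra_simps)
          finally have "(n + \<delta> * (n - t)) * (n + \<delta> * p0) > 0" using n0 d by (smt (verit) mult_pos_pos)
          thus ?thesis using den by (simp add: zero_less_mult_iff)
        qed
        thus ?thesis using n0 by (simp add: field_simps)
      qed
      have "t \<le> p0 * (1 + ?k t)" using \<open>t * n \<le> _\<close> n0 by (simp add: field_simps)
      hence "t / (1 + ?k t) \<le> p0" using kp by (simp add: divide_le_eq mult.commute)
      thus "t \<in> Tset (F_delta S \<delta>) e" using kpos[OF kp] Teq by auto
    qed
    show "riesz_char (F_delta S \<delta>) e = ereal (n * (1 + \<delta>) * real_of_ereal p / (n + \<delta> * real_of_ereal p))"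
      by (simp add: riesz_Tset T'eq Sup_ereal_atMost ts_def pp)
  }
  {
    assume pinf: "p = \<infinity>" and dp: "\<delta> > 0"
    have Tall: "t \<in> ?T" for t
    proof -
      obtain t' where "t' \<in> ?T" "t < t'" using Sup_inf_unb[of ?T t] pinf by (auto simp: p_def riesz_Tset)
      thus ?thesis using T_down[OF g e] by auto
    qed
    have negP: "Mab e 0 (-1) \<in> S" by (rule negP_closed[OF g e Tall])
    define ts where "ts = n * (1 + \<delta>) / \<delta>"
    have T'eq: "Tset (F_delta S \<delta>) e = {..ts}"
    proof (intro set_eqI)
      fix t
      have eqv: "1 + ?k t > 0 \<longleftrightarrow> t < ts" "1 + ?k t = 0 \<longleftrightarrow> t = ts"
        using n0 dp by (auto simp: ts_def field_simps)
      show "t \<in> Tset (F_delta S \<delta>) e \<longleftrightarrow> t \<in> {..ts}"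
      proof (cases "t < ts")
        case True thus ?thesis using kpos eqv Tall by auto
      next
        case False
        have tspos: "ts > 0" using n0 dp by (simp add: ts_def)
        show ?thesis
        proof (cases "t = ts")
          case True
          have "Mab e (ts * 0) (ts * (-1)) \<in> S" by (rule good_scale[OF g negP tspos])
          hence m: "Mab e 0 (-ts) \<in> S" by simp
          have z: "1 + ?k ts = 0" using eqv True by simp
          hence "1 - ts + ?k ts = -ts" by linarith
          hence "Mab e (1 + ?k ts) (1 - ts + ?k ts) \<in> S" using m z by metis
          thus ?thesis using True FdT by simp
        next
          case False
          hence "1 + ?k t < 0" "t > 0" using \<open>\<not> t < ts\<close> eqv tspos by linarith+
          thus ?thesis using kneg False \<open>\<not> t < ts\<close> by auto
        qed
      qed
    qed
    show "riesz_char (F_delta S \<delta>) e = ereal (n * (1 + \<delta>) / \<delta>)"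
      by (simp add: riesz_Tset T'eq Sup_ereal_atMost ts_def)
  }
qed



lemma closed_Sym2: "closed (Sym2 :: (real^'n^'n) set)"
  unfolding Sym2_def transpose_def by (intro closed_Collect_eq continuous_intros)

lemma mat_norm_bound: "norm ((A::real^'n^'n) *v x) \<le> real CARD('n) * real CARD('n) * norm A * norm x"
proof -
  have bl: "bounded_linear ((*v) A)" by (simp add: linear_conv_bounded_linear)
  have "onorm ((*v) A) \<le> real CARD('n) * real CARD('n) * norm A"
    by (rule onorm_le_matrix_component) (rule order_trans[OF component_le_norm_cart Finite_Cartesian_Product.norm_nth_le])
  thus ?thesis using onorm[OF bl, of x] by (meson mult_right_mono norm_ge_zero order_trans)
qed

lemma quad_bound: "x \<bullet> ((A::real^'n^'n) *v x) \<ge> - (real CARD('n) * real CARD('n) * norm A) * (x \<bullet> x)"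
proof -
  have "\<bar>x \<bullet> (A *v x)\<bar> \<le> norm x * norm (A *v x)" by (rule Cauchy_Schwarz_ineq2)
  also have "\<dots> \<le> norm x * (real CARD('n) * real CARD('n) * norm A * norm x)"
    by (rule mult_left_mono[OF mat_norm_bound]) simp
  also have "\<dots> = (real CARD('n) * real CARD('n) * norm A) * (x \<bullet> x)"
    by (simp add: dot_square_norm power2_eq_square)
  finally show ?thesis by (simp add: abs_le_iff)
qed

lemma ex_le_xx: fixes e :: "real^'n" assumes "norm e = 1" shows "(e \<bullet> x)^2 \<le> x \<bullet> x"
proof -
  have "\<bar>e \<bullet> x\<bar> \<le> norm x" using Cauchy_Schwarz_ineq2[of e x] assms by simp
  hence "(e \<bullet> x)^2 \<le> (norm x)^2" by (metis abs_ge_zero power2_abs power_mono)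
  thus ?thesis by (simp add: power2_norm_eq_inner)
qed

lemma sym_add: "A \<in> Sym2 \<Longrightarrow> B \<in> Sym2 \<Longrightarrow> A + B \<in> Sym2"
  by (simp add: Sym2_def transpose_def vec_eq_iff)
lemma sym_diff: "A \<in> Sym2 \<Longrightarrow> B \<in> Sym2 \<Longrightarrow> A - B \<in> Sym2"
  by (simp add: Sym2_def transpose_def vec_eq_iff)
lemma sym_neg: "A \<in> Sym2 \<Longrightarrow> - A \<in> Sym2"
  by (simp add: Sym2_def transpose_def vec_eq_iff)
lemma sym_scale: "(A::real^'n^'n) \<in> Sym2 \<Longrightarrow> c *\<^sub>R A \<in> Sym2"
  by (simp add: Sym2_def transpose_def vec_eq_iff)
lemma sym_mat1: "(mat 1 :: real^'n^'n) \<in> Sym2"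
  by (simp add: Sym2_def)

lemma cone_zero: "cone_subequation F \<Longrightarrow> 0 \<in> F"
  unfolding cone_subequation_def by (metis all_not_in_conv order_refl scale_zero_left)

lemma good_F: fixes F :: "(real^'n^'n) set" and e :: "real^'n"
  assumes c: "cone_subequation F" and e: "norm e = 1" shows "good F e"
  unfolding good_def
proof (intro conjI allI impI ballI)
  show "closed F" using c by (simp add: cone_subequation_def)
  show "\<And>A X. A \<in> F \<Longrightarrow> psd X \<Longrightarrow> A + X \<in> F" using c by (simp add: cone_subequation_def)
  show "\<And>A c. A \<in> F \<Longrightarrow> 0 < c \<Longrightarrow> c *\<^sub>R A \<in> F" using c by (simp add: cone_subequation_def)
  show "0 \<in> F" by (rule cone_zero[OF c])
  fix a b :: real assume a: "a < 0" and b: "b < 0"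
  show "Mab e a b \<notin> F"
  proof
    assume M: "Mab e a b \<in> F"
    define m where "m = min (-a) (-b)"
    have m0: "m > 0" using a b by (simp add: m_def)
    have "Sym2 \<subseteq> F"
    proof
      fix A :: "real^'n^'n" assume A: "A \<in> Sym2"
      define K where "K = real CARD('n) * real CARD('n) * norm A"
      have K0: "K \<ge> 0" by (simp add: K_def)
      have ps1: "psd (A + K *\<^sub>R mat 1)"
        unfolding psd_def
      proof (intro conjI allI)
        show "A + K *\<^sub>R mat 1 \<in> Sym2" by (intro sym_add sym_scale A sym_mat1)
        fix x :: "real^'n"
        have "x \<bullet> ((A + K *\<^sub>R mat 1) *v x) = x \<bullet> (A *v x) + K * (x \<bullet> x)"
          by (simp add: matrix_vector_mult_add_rdistrib scaleR_matrix_vector_assoc[symmetric] inner_add_right)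
        thus "0 \<le> x \<bullet> ((A + K *\<^sub>R mat 1) *v x)" using quad_bound[where x=x and A=A] by (simp add: K_def)
      qed
      have ps2: "psd (Mab e ((K/m) * (-a - m)) ((K/m) * (-b - m)))"
        using m0 K0 by (intro Mab_psd e mult_nonneg_nonneg) (auto simp: m_def)
      have s1: "(K/m) *\<^sub>R Mab e a b \<in> F" using c M m0 K0 by (simp add: cone_subequation_def)
      have s2: "(K/m) *\<^sub>R Mab e a b + Mab e ((K/m) * (-a - m)) ((K/m) * (-b - m)) \<in> F"
        using c s1 ps2 by (simp add: cone_subequation_def)
      have eq: "(K/m) *\<^sub>R Mab e a b + Mab e ((K/m) * (-a - m)) ((K/m) * (-b - m)) = - (K *\<^sub>R mat 1)"
        using m0 by (simp add: Mab_scale Mab_add Mab_mat1[of e] Mab_neg algebra_simps)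
      have s3: "- (K *\<^sub>R mat 1) \<in> F" using s2 eq by simp
      have "- (K *\<^sub>R mat 1) + (A + K *\<^sub>R mat 1) \<in> F"
        using c s3 ps1 unfolding cone_subequation_def by blast
      thus "A \<in> F" by simp
    qed
    thus False using c by (auto simp: cone_subequation_def)
  qed
qed



lemma int_char: "x \<in> (top_of_set Sym2) interior_of F \<longleftrightarrow>
   x \<in> Sym2 \<and> (\<exists>T. open T \<and> x \<in> T \<and> Sym2 \<inter> T \<subseteq> F)"
  unfolding interior_of_def openin_open by auto

lemma dual_mem: "M \<in> dual_subeq F \<longleftrightarrow> M \<in> Sym2 \<and> - M \<notin> (top_of_set Sym2) interior_of F"
  unfolding dual_subeq_def by (auto simp: image_iff)

lemma good_dual: fixes F :: "(real^'n^'n) set" and e :: "real^'n"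
  assumes c: "cone_subequation F" and e: "norm e = 1" shows "good (dual_subeq F) e"
  unfolding good_def
proof (intro conjI allI impI ballI)
  have FS: "F \<subseteq> Sym2" using c by (simp add: cone_subequation_def)
  have Fpsd: "\<And>A X. A \<in> F \<Longrightarrow> psd X \<Longrightarrow> A + X \<in> F" using c by (simp add: cone_subequation_def)
  have Fsc: "\<And>A t. A \<in> F \<Longrightarrow> 0 \<le> t \<Longrightarrow> t *\<^sub>R A \<in> F" using c by (simp add: cone_subequation_def)
  show "closed (dual_subeq F)"
  proof -
    have "openin (top_of_set Sym2) ((top_of_set Sym2) interior_of F)" by (rule openin_interior_of)
    then obtain T0 where T0: "open T0" "(top_of_set Sym2) interior_of F = Sym2 \<inter> T0"
      by (meson openin_open)
    have "dual_subeq F = Sym2 \<inter> - (uminus ` T0)"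
      using T0 by (auto simp: dual_mem sym_neg image_iff) (metis minus_minus sym_neg)+
    moreover have "closed (Sym2 \<inter> - (uminus ` T0))"
      using closed_Sym2 open_negations[OF T0(1)] by (intro closed_Int) (auto simp: closed_Compl)
    ultimately show ?thesis by simp
  qed
  show "M + X \<in> dual_subeq F" if M: "M \<in> dual_subeq F" and X: "psd X" for M X
  proof -
    have XS: "X \<in> Sym2" using X by (simp add: psd_def)
    have MS: "M \<in> Sym2" and nI: "- M \<notin> (top_of_set Sym2) interior_of F" using M by (auto simp: dual_mem)
    have "- (M + X) \<notin> (top_of_set Sym2) interior_of F"
    proof
      assume "- (M + X) \<in> (top_of_set Sym2) interior_of F"
      then obtain T where T: "open T" "- (M + X) \<in> T" "Sym2 \<inter> T \<subseteq> F" by (auto simp: int_char)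
      let ?T = "(\<lambda>Y. Y - X) -` T"
      have "open ?T" by (rule continuous_open_vimage[OF T(1)]) (intro continuous_intros)
      moreover have "- M \<in> ?T" using T(2) by (simp add: algebra_simps)
      moreover have "Sym2 \<inter> ?T \<subseteq> F"
      proof
        fix Y assume "Y \<in> Sym2 \<inter> ?T"
        hence "Y - X \<in> F" using T(3) sym_diff[OF _ XS] by auto
        from Fpsd[OF this X] show "Y \<in> F" by simp
      qed
      ultimately have "- M \<in> (top_of_set Sym2) interior_of F" using MS sym_neg by (auto simp: int_char)
      thus False using nI by simp
    qed
    thus ?thesis using MS XS by (simp add: dual_mem sym_add)
  qed
  show "t *\<^sub>R M \<in> dual_subeq F" if M: "M \<in> dual_subeq F" and t: "0 < t" for M t
  proof -
    have MS: "M \<in> Sym2" and nI: "- M \<notin> (top_of_set Sym2) interior_of F" using M by (auto simp: dual_mem)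
    have "- (t *\<^sub>R M) \<notin> (top_of_set Sym2) interior_of F"
    proof
      assume "- (t *\<^sub>R M) \<in> (top_of_set Sym2) interior_of F"
      then obtain T where T: "open T" "- (t *\<^sub>R M) \<in> T" "Sym2 \<inter> T \<subseteq> F" by (auto simp: int_char)
      let ?T = "(\<lambda>Y. t *\<^sub>R Y) -` T"
      have "open ?T" by (rule continuous_open_vimage[OF T(1)]) (intro continuous_intros)
      moreover have "- M \<in> ?T" using T(2) by simp
      moreover have "Sym2 \<inter> ?T \<subseteq> F"
      proof
        fix Y assume "Y \<in> Sym2 \<inter> ?T"
        hence "t *\<^sub>R Y \<in> F" using T(3) sym_scale by auto
        from Fsc[OF this, of "1/t"] t show "Y \<in> F" by simp
      qed
      ultimately have "- M \<in> (top_of_set Sym2) interior_of F" using MS sym_neg by (auto simp: int_char)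
      thus False using nI by simp
    qed
    thus ?thesis using MS by (simp add: dual_mem sym_scale)
  qed
  show "0 \<in> dual_subeq F"
  proof -
    have "0 \<notin> (top_of_set Sym2) interior_of F"
    proof
      assume "0 \<in> (top_of_set Sym2) interior_of F"
      then obtain T where T: "open T" "0 \<in> T" "Sym2 \<inter> T \<subseteq> F" by (auto simp: int_char)
      obtain r where r: "r > 0" "ball 0 r \<subseteq> T" using open_contains_ball_eq[OF T(1)] T(2) by blast
      have "Sym2 \<subseteq> F"
      proof
        fix A :: "real^'n^'n" assume A: "A \<in> Sym2"
        define s where "s = r / (2 * (norm A + 1))"
        have d0: "2 * (norm A + 1) > 0" by (smt (verit) norm_ge_zero)
        have s0: "s > 0" unfolding s_def using r(1) d0 by (rule divide_pos_pos)
        have "norm (s *\<^sub>R A) < r"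
        proof -
          have "norm (s *\<^sub>R A) = s * norm A" using s0 by simp
          also have "\<dots> \<le> s * (norm A + 1)" using s0 by simp
          also have "\<dots> = r / 2"
          proof -
            have h: "norm A + 1 \<noteq> 0" by (smt (verit) norm_ge_zero)
            show ?thesis unfolding s_def using h by (simp add: field_simps)
          qed
          finally show ?thesis using r by simp
        qed
        hence "s *\<^sub>R A \<in> ball 0 r" by (simp add: dist_norm)
        hence "s *\<^sub>R A \<in> Sym2 \<inter> T" using r(2) sym_scale[OF A] by blast
        hence "s *\<^sub>R A \<in> F" using T(3) by blast
        from Fsc[OF this, of "1/s"] s0 show "A \<in> F" by simp
      qed
      thus False using c FS by (auto simp: cone_subequation_def)
    qed
    moreover have "(0::real^'n^'n) \<in> Sym2" by (simp add: Sym2_def transpose_def vec_eq_iff)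
    ultimately show ?thesis by (simp add: dual_mem)
  qed
  fix a b :: real assume a: "a < 0" and b: "b < 0"
  show "Mab e a b \<notin> dual_subeq F"
  proof
    assume "Mab e a b \<in> dual_subeq F"
    hence nI: "Mab e (-a) (-b) \<notin> (top_of_set Sym2) interior_of F" by (simp add: dual_mem Mab_neg)
    define m where "m = min (-a) (-b)"
    have m0: "m > 0" using a b by (simp add: m_def)
    define K where "K = real CARD('n) * real CARD('n)"
    have K0: "K > 0" by (simp add: K_def)
    let ?M = "Mab e (-a) (-b)"
    have "?M \<in> (top_of_set Sym2) interior_of F"
      unfolding int_char
    proof (intro conjI exI)
      show "?M \<in> Sym2" by (rule Mab_sym)
      show "open (ball ?M (m / K))" by simp
      show "?M \<in> ball ?M (m / K)" using m0 K0 by simp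
      show "Sym2 \<inter> ball ?M (m / K) \<subseteq> F"
      proof
        fix Y assume Y: "Y \<in> Sym2 \<inter> ball ?M (m / K)"
        have "psd Y" unfolding psd_def
        proof (intro conjI allI)
          show "Y \<in> Sym2" using Y by simp
          fix x :: "real^'n"
          have nd: "norm (Y - ?M) < m / K" using Y by (simp add: dist_norm norm_minus_commute)
          have q1: "x \<bullet> (?M *v x) \<ge> m * (x \<bullet> x)"
          proof -
            have "x \<bullet> (?M *v x) = (-a) * (x \<bullet> x - (e \<bullet> x)^2) + (-b) * (e \<bullet> x)^2"
              by (simp add: Mab_quad algebra_simps)
            also have "\<dots> \<ge> m * (x \<bullet> x - (e \<bullet> x)^2) + m * (e \<bullet> x)^2"
              using ex_le_xx[OF e, of x] by (intro add_mono mult_right_mono) (auto simp: m_def)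
            finally show ?thesis by (simp add: algebra_simps)
          qed
          have q2: "x \<bullet> ((Y - ?M) *v x) \<ge> - (K * norm (Y - ?M) * (x \<bullet> x))"
            using quad_bound[where A = "Y - ?M" and x = x] by (simp add: K_def)
          have "K * norm (Y - ?M) \<le> m" using nd K0 by (simp add: field_simps)
          hence q3: "(K * norm (Y - ?M)) * (x \<bullet> x) \<le> m * (x \<bullet> x)" by (simp add: mult_right_mono)
          have "x \<bullet> (Y *v x) = x \<bullet> (?M *v x) + x \<bullet> ((Y - ?M) *v x)"
            by (simp add: matrix_vector_mult_diff_rdistrib inner_diff_right)
          thus "0 \<le> x \<bullet> (Y *v x)" using q1 q2 q3 by linarith
        qed
        from Fpsd[OF cone_zero[OF c] this] show "Y \<in> F" by simp
      qed
    qed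
    thus False using nI by simp
  qed
qed



definition Lm :: "real \<Rightarrow> real^'n^'n \<Rightarrow> real^'n^'n" where
  "Lm \<delta> A = A + (\<delta> * trace A / real CARD('n)) *\<^sub>R mat 1"
definition Li :: "real \<Rightarrow> real^'n^'n \<Rightarrow> real^'n^'n" where
  "Li \<delta> B = B - (\<delta> * trace B / (real CARD('n) * (1 + \<delta>))) *\<^sub>R mat 1"

lemma trace_Lm: "trace (Lm \<delta> (A::real^'n^'n)) = (1 + \<delta>) * trace A"
  by (simp add: Lm_def trace_add trace_scaleR trace_I algebra_simps)
lemma trace_Li: "\<delta> \<ge> 0 \<Longrightarrow> trace (Li \<delta> (A::real^'n^'n)) = trace A / (1 + \<delta>)"
proof -
  assume d: "\<delta> \<ge> 0"
  have n0: "real CARD('n) \<noteq> 0" by simp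
  have d1: "1 + \<delta> \<noteq> 0" using d by linarith
  have "trace (Li \<delta> A) = trace A - (\<delta> * trace A / (real CARD('n) * (1 + \<delta>))) * real CARD('n)"
    by (simp add: Li_def trace_sub trace_scaleR trace_I)
  also have "(\<delta> * trace A / (real CARD('n) * (1 + \<delta>))) * real CARD('n) = \<delta> * trace A / (1 + \<delta>)"
    using n0 by simp
  also have "trace A - \<delta> * trace A / (1 + \<delta>) = trace A / (1 + \<delta>)"
    using d1 by (simp add: field_simps)
  finally show ?thesis .
qed

lemma Li_Lm: "\<delta> \<ge> 0 \<Longrightarrow> Li \<delta> (Lm \<delta> (A::real^'n^'n)) = A"
proof -
  assume d: "\<delta> \<ge> 0"
  have d1: "1 + \<delta> \<noteq> 0" using d by linarith
  have h: "(\<delta> * ((1 + \<delta>) * trace A) / (real CARD('n) * (1 + \<delta>))) = \<delta> * trace A / real CARD('n)"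
    using d1 by simp
  show ?thesis unfolding Li_def trace_Lm h unfolding Lm_def by simp
qed

lemma Lm_Li: "\<delta> \<ge> 0 \<Longrightarrow> Lm \<delta> (Li \<delta> (A::real^'n^'n)) = A"
proof -
  assume d: "\<delta> \<ge> 0"
  have h: "\<delta> * (trace A / (1 + \<delta>)) / real CARD('n) = \<delta> * trace A / (real CARD('n) * (1 + \<delta>))"
    by (simp add: mult.commute)
  show ?thesis unfolding Lm_def trace_Li[OF d] h unfolding Li_def by simp
qed

lemma Lm_neg: "Lm \<delta> (- (A::real^'n^'n)) = - Lm \<delta> A"
  by (simp add: Lm_def trace_neg algebra_simps)

lemma Lm_sym: "A \<in> Sym2 \<Longrightarrow> Lm \<delta> (A::real^'n^'n) \<in> Sym2"
  unfolding Lm_def by (intro sym_add sym_scale sym_mat1)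
lemma Li_sym: "A \<in> Sym2 \<Longrightarrow> Li \<delta> (A::real^'n^'n) \<in> Sym2"
  unfolding Li_def by (intro sym_diff sym_scale sym_mat1)

lemma cont_gen: "continuous (at x) (\<lambda>A::real^'n^'n. A + (c * trace A) *\<^sub>R mat 1)"
  unfolding trace_def by (intro continuous_intros)

lemma Lm_cont: "continuous (at x) (Lm \<delta> :: real^'n^'n \<Rightarrow> _)"
proof -
  have "Lm \<delta> = (\<lambda>A::real^'n^'n. A + ((\<delta> / real CARD('n)) * trace A) *\<^sub>R mat 1)"
    by (auto simp: Lm_def fun_eq_iff)
  thus ?thesis using cont_gen[of x "\<delta> / real CARD('n)"] by simp
qed
lemma Li_cont: "continuous (at x) (Li \<delta> :: real^'n^'n \<Rightarrow> _)"
proof -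
  have "Li \<delta> = (\<lambda>A::real^'n^'n. A + ((- \<delta> / (real CARD('n) * (1 + \<delta>))) * trace A) *\<^sub>R mat 1)"
    unfolding Li_def fun_eq_iff by (simp add: minus_divide_left[symmetric])
  thus ?thesis using cont_gen[of x "- \<delta> / (real CARD('n) * (1 + \<delta>))"] by simp
qed

lemma Fd_Lm: "F_delta F \<delta> = {A \<in> Sym2. Lm \<delta> A \<in> F}"
  by (simp add: F_delta_def Lm_def)

lemma int_Fd: fixes F :: "(real^'n^'n) set"
  assumes d: "\<delta> \<ge> 0" and X: "X \<in> Sym2"
  shows "X \<in> (top_of_set Sym2) interior_of (F_delta F \<delta>) \<longleftrightarrow> Lm \<delta> X \<in> (top_of_set Sym2) interior_of F"
proof
  assume "X \<in> (top_of_set Sym2) interior_of (F_delta F \<delta>)"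
  then obtain T where T: "open T" "X \<in> T" "Sym2 \<inter> T \<subseteq> F_delta F \<delta>" by (auto simp: int_char)
  let ?U = "Li \<delta> -` T"
  have "open ?U" by (rule continuous_open_vimage[OF T(1) Li_cont])
  moreover have "Lm \<delta> X \<in> ?U" using T(2) Li_Lm[OF d, of X] by simp
  moreover have "Sym2 \<inter> ?U \<subseteq> F"
  proof
    fix Y assume "Y \<in> Sym2 \<inter> ?U"
    hence "Li \<delta> Y \<in> Sym2 \<inter> T" using Li_sym by auto
    hence "Lm \<delta> (Li \<delta> Y) \<in> F" using T(3) by (auto simp: Fd_Lm)
    thus "Y \<in> F" using Lm_Li[OF d, of Y] by simp
  qed
  ultimately show "Lm \<delta> X \<in> (top_of_set Sym2) interior_of F" using Lm_sym[OF X] by (auto simp: int_char)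
next
  assume "Lm \<delta> X \<in> (top_of_set Sym2) interior_of F"
  then obtain T where T: "open T" "Lm \<delta> X \<in> T" "Sym2 \<inter> T \<subseteq> F" by (auto simp: int_char)
  let ?U = "Lm \<delta> -` T"
  have "open ?U" by (rule continuous_open_vimage[OF T(1) Lm_cont])
  moreover have "X \<in> ?U" using T(2) by simp
  moreover have "Sym2 \<inter> ?U \<subseteq> F_delta F \<delta>"
  proof
    fix Y assume "Y \<in> Sym2 \<inter> ?U"
    thus "Y \<in> F_delta F \<delta>" using T(3) Lm_sym by (auto simp: Fd_Lm)
  qed
  ultimately show "X \<in> (top_of_set Sym2) interior_of (F_delta F \<delta>)" using X by (auto simp: int_char)
qed

lemma dual_Fd: fixes F :: "(real^'n^'n) set"
  assumes d: "\<delta> \<ge> 0"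
  shows "dual_subeq (F_delta F \<delta>) = F_delta (dual_subeq F) \<delta>"
proof (intro set_eqI)
  fix M :: "real^'n^'n"
  show "M \<in> dual_subeq (F_delta F \<delta>) \<longleftrightarrow> M \<in> F_delta (dual_subeq F) \<delta>"
  proof (cases "M \<in> Sym2")
    case True
    have "- M \<in> (top_of_set Sym2) interior_of (F_delta F \<delta>) \<longleftrightarrow> - Lm \<delta> M \<in> (top_of_set Sym2) interior_of F"
      using int_Fd[OF d sym_neg[OF True], of F] Lm_neg[of \<delta> M] by simp
    thus ?thesis using True Lm_sym[OF True] by (simp add: dual_mem Fd_Lm)
  next
    case False
    thus ?thesis by (simp add: dual_mem Fd_Lm)
  qed
qed



lemma riesz_ge1: "good S e \<Longrightarrow> norm e = 1 \<Longrightarrow> riesz_char S e \<ge> ereal 1"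
  unfolding riesz_Tset using T_one by (blast intro: Sup_upper)

lemma alg_id: fixes n \<delta> x :: real assumes "n > 0" "\<delta> \<ge> 0" "x \<ge> 1"
  shows "n * (1 + \<delta>) * x / (n + \<delta> * x) = x + \<delta> * x * (n - x) / (n + \<delta> * x)"
proof -
  have den: "n + \<delta> * x > 0" using assms by (simp add: add_pos_nonneg)
  hence "n + \<delta> * x \<noteq> 0" by simp
  thus ?thesis by (simp add: field_simps)
qed

theorem propositionA11:
  fixes F G :: "(real^'n^'n) set" and e :: "real^'n" and \<delta> :: real
  assumes "cone_subequation F"
    and "transitive_orth_subgroup G"
    and "invariant_under G F"
    and "norm e = 1"
    and "\<delta> \<ge> 0"
  defines "n \<equiv> real CARD('n)"
  defines "p \<equiv> riesz_char F e"
  defines "q \<equiv> riesz_char (dual_subeq F) e"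
  shows "(p \<noteq> \<infinity> \<longrightarrow>
            riesz_char (F_delta F \<delta>) e
              = ereal (n * (1 + \<delta>) * real_of_ereal p / (n + \<delta> * real_of_ereal p)) \<and>
            riesz_char (F_delta F \<delta>) e
              = ereal (real_of_ereal p + \<delta> * real_of_ereal p * (n - real_of_ereal p)
                                        / (n + \<delta> * real_of_ereal p)))
       \<and> (q \<noteq> \<infinity> \<longrightarrow>
            riesz_char (dual_subeq (F_delta F \<delta>)) e
              = ereal (n * (1 + \<delta>) * real_of_ereal q / (n + \<delta> * real_of_ereal q)) \<and>
            riesz_char (dual_subeq (F_delta F \<delta>)) e
              = ereal (real_of_ereal q + \<delta> * real_of_ereal q * (n - real_of_ereal q)
                                        / (n + \<delta> * real_of_ereal q)))
       \<and> (p = \<infinity> \<longrightarrow> \<delta> > 0 \<longrightarrow> riesz_char (F_delta F \<delta>) e = ereal (n * (1 + \<delta>) / \<delta>))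
       \<and> (q = \<infinity> \<longrightarrow> \<delta> > 0 \<longrightarrow> riesz_char (dual_subeq (F_delta F \<delta>)) e = ereal (n * (1 + \<delta>) / \<delta>))"
proof -
  have gF: "good F e" by (rule good_F[OF assms(1) assms(4)])
  have gD: "good (dual_subeq F) e" by (rule good_dual[OF assms(1) assms(4)])
  note kF = key[OF gF assms(4) assms(5)]
  note kD = key[OF gD assms(4) assms(5)]
  have DD: "dual_subeq (F_delta F \<delta>) = F_delta (dual_subeq F) \<delta>" by (rule dual_Fd[OF assms(5)])
  have n0: "n > 0" by (simp add: n_def)
  have p1: "p \<noteq> \<infinity> \<Longrightarrow> real_of_ereal p \<ge> 1"
    using riesz_ge1[OF gF assms(4)] unfolding p_def by (cases "riesz_char F e") auto
  have q1: "q \<noteq> \<infinity> \<Longrightarrow> real_of_ereal q \<ge> 1"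
    using riesz_ge1[OF gD assms(4)] unfolding q_def by (cases "riesz_char (dual_subeq F) e") auto
  show ?thesis
    using kF kD p1 q1 alg_id[OF n0 assms(5)]
    unfolding DD p_def[symmetric] q_def[symmetric] n_def[symmetric] by auto
qed


end
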